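(* Let $(X,x)$ be a pointed diffeological space. The map $\alpha:\hat{T}_x(X)\to T'_x(X)$ defined by $\alpha(F)([f]+I_x^2(X))=F([f])$ is an isomorphism of vector spaces.
   Context: A diffeological space is a set $X$ together with, for every open subset $U$ of every $\mathbb{R}^n$, a set of functions $U\to X$ called plots, such that constant maps are plots, the composite of a plot with a smooth map between open subsets of Euclidean spaces is a plot, and a function which is locally a plot is a plot; smooth maps send plots to plots. A subset of $X$ is $D$-open if its preimage under every plot is open. For a diffeological space $B$, $C^\infty(B,\mathbb{R})$ carries the functional diffeology: a map $U\to C^\infty(B,\mathbb{R})$ is a plot iff its adjoint $U\times B\to\mathbb{R}$ is smooth. Let $G_x(X)=\operatorname{colim}_B C^\infty(B,\mathbb{R})$, the colimit taken in the category of diffeological spaces over all $D$-open subsets $B$ of $X$ containing $x$ (with the sub-diffeology), along restriction maps; it is a diffeological $\mathbb{R}$-algebra (germs of smooth functions at $x$) with smooth evaluation map $[f]\mapsto f(x)$. An external tangent vector at $x$ is a smooth linear map $F:G_x(X)\to\mathbb{R}$ satisfying $F([f][g])=F([f])g(x)+f(x)F([g])$; $\hat{T}_x(X)$ is the vector space of these. Let $I_x(X)$ be the kernel of evaluation with the sub-diffeology, $I_x(X)/I_x^2(X)$ the quotient vector space with the quotient diffeology, and $T'_x(X)$ the vector space of smooth linear maps $I_x(X)/I_x^2(X)\to\mathbb{R}$. *)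

theory Defs
  imports "HOL-Analysis.Analysis"
begin

text \<open>A point of R^n is encoded as a function nat => real vanishing at all
  coordinates i >= n.  The topology used for continuity is the product topology
  on nat => real, which restricts on R^n to the usual one.\<close>

definition Rn :: "nat \<Rightarrow> (nat \<Rightarrow> real) set" where
  "Rn n = {y. \<forall>i\<ge>n. y i = 0}"

definition open_Rn :: "nat \<Rightarrow> (nat \<Rightarrow> real) set \<Rightarrow> bool" where
  "open_Rn n U \<longleftrightarrow> U \<subseteq> Rn n \<and>
     (\<forall>y\<in>U. \<exists>e>0. \<forall>z\<in>Rn n. (\<forall>i<n. \<bar>z i - y i\<bar> < e) \<longrightarrow> z \<in> U)"

definition partial :: "nat \<Rightarrow> ((nat \<Rightarrow> real) \<Rightarrow> real) \<Rightarrow> (nat \<Rightarrow> real) \<Rightarrow> real" where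
  "partial i f y = deriv (\<lambda>t. f (y(i := y i + t))) 0"

fun Ck :: "nat \<Rightarrow> (nat \<Rightarrow> real) set \<Rightarrow> nat \<Rightarrow> ((nat \<Rightarrow> real) \<Rightarrow> real) \<Rightarrow> bool" where
  "Ck n U 0 f = continuous_on U f"
| "Ck n U (Suc k) f =
     (continuous_on U f \<and>
      (\<forall>y\<in>U. \<forall>i<n. (\<lambda>t. f (y(i := y i + t))) differentiable (at 0)) \<and>
      (\<forall>i<n. Ck n U k (partial i f)))"

definition smooth_fun :: "nat \<Rightarrow> (nat \<Rightarrow> real) set \<Rightarrow> ((nat \<Rightarrow> real) \<Rightarrow> real) \<Rightarrow> bool" where
  "smooth_fun n U f \<longleftrightarrow> (\<forall>k. Ck n U k f)"

definition smooth_map ::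
  "nat \<Rightarrow> (nat \<Rightarrow> real) set \<Rightarrow> nat \<Rightarrow> (nat \<Rightarrow> real) set \<Rightarrow> ((nat \<Rightarrow> real) \<Rightarrow> (nat \<Rightarrow> real)) \<Rightarrow> bool" where
  "smooth_map m V n U g \<longleftrightarrow> g ` V \<subseteq> U \<and> (\<forall>i<n. smooth_fun m V (\<lambda>v. g v i))"

text \<open>A family of plots: D n U p says that p (restricted to U) is a plot with domain
  the open set U of R^n.\<close>
type_synonym 'a plots = "nat \<Rightarrow> (nat \<Rightarrow> real) set \<Rightarrow> ((nat \<Rightarrow> real) \<Rightarrow> 'a) \<Rightarrow> bool"

definition diffeology :: "'a set \<Rightarrow> 'a plots \<Rightarrow> bool" where
  "diffeology X D \<longleftrightarrow>
     (\<forall>n U p. D n U p \<longrightarrow> open_Rn n U \<and> p ` U \<subseteq> X)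
   \<and> (\<forall>n U y. open_Rn n U \<and> y \<in> X \<longrightarrow> D n U (\<lambda>_. y))
   \<and> (\<forall>n U p m V g. D n U p \<and> open_Rn m V \<and> smooth_map m V n U g \<longrightarrow> D m V (p \<circ> g))
   \<and> (\<forall>n U p. open_Rn n U \<and> p ` U \<subseteq> X \<and>
        (\<forall>u\<in>U. \<exists>V. open_Rn n V \<and> u \<in> V \<and> V \<subseteq> U \<and> D n V p) \<longrightarrow> D n U p)"

definition dsmooth :: "'a set \<Rightarrow> 'a plots \<Rightarrow> 'b set \<Rightarrow> 'b plots \<Rightarrow> ('a \<Rightarrow> 'b) \<Rightarrow> bool" where
  "dsmooth X DX Y DY f \<longleftrightarrow> f ` X \<subseteq> Y \<and> (\<forall>n U p. DX n U p \<longrightarrow> DY n U (f \<circ> p))"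

definition D_open :: "'a set \<Rightarrow> 'a plots \<Rightarrow> 'a set \<Rightarrow> bool" where
  "D_open X D A \<longleftrightarrow> A \<subseteq> X \<and> (\<forall>n U p. D n U p \<longrightarrow> open_Rn n {u\<in>U. p u \<in> A})"

definition sub_plots :: "'a plots \<Rightarrow> 'a set \<Rightarrow> 'a plots" where
  "sub_plots D B n U p \<longleftrightarrow> D n U p \<and> p ` U \<subseteq> B"

definition real_plots :: "real plots" where
  "real_plots n U p \<longleftrightarrow> open_Rn n U \<and> smooth_fun n U p"

definition std_plots :: "nat \<Rightarrow> (nat \<Rightarrow> real) set \<Rightarrow> (nat \<Rightarrow> real) plots" where
  "std_plots n U k W g \<longleftrightarrow> open_Rn k W \<and> smooth_map k W n U g"

definition prod_plots :: "'a plots \<Rightarrow> 'b plots \<Rightarrow> ('a \<times> 'b) plots" where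
  "prod_plots D1 D2 k W p \<longleftrightarrow> D1 k W (fst \<circ> p) \<and> D2 k W (snd \<circ> p)"

definition Cinf :: "'a set \<Rightarrow> 'a plots \<Rightarrow> ('a \<Rightarrow> real) set" where
  "Cinf B DB = {f. dsmooth B DB UNIV real_plots f \<and> (\<forall>y. y \<notin> B \<longrightarrow> f y = 0)}"

definition fun_plots :: "'a set \<Rightarrow> 'a plots \<Rightarrow> ('a \<Rightarrow> real) plots" where
  "fun_plots B DB n U q \<longleftrightarrow> open_Rn n U \<and> q ` U \<subseteq> Cinf B DB \<and>
     dsmooth (U \<times> B) (prod_plots (std_plots n U) DB) UNIV real_plots (\<lambda>(u, b). q u b)"

definition nbhds :: "'a set \<Rightarrow> 'a plots \<Rightarrow> 'a \<Rightarrow> 'a set set" where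
  "nbhds X D x = {B. D_open X D B \<and> x \<in> B}"

definition germ_reps :: "'a set \<Rightarrow> 'a plots \<Rightarrow> 'a \<Rightarrow> ('a set \<times> ('a \<Rightarrow> real)) set" where
  "germ_reps X D x = {(B, f). B \<in> nbhds X D x \<and> f \<in> Cinf B (sub_plots D B)}"

definition germ_rel :: "'a set \<Rightarrow> 'a plots \<Rightarrow> 'a \<Rightarrow> ('a set \<times> ('a \<Rightarrow> real)) \<Rightarrow> ('a set \<times> ('a \<Rightarrow> real)) \<Rightarrow> bool" where
  "germ_rel X D x r s \<longleftrightarrow>
     (\<exists>W\<in>nbhds X D x. W \<subseteq> fst r \<inter> fst s \<and> (\<forall>y\<in>W. snd r y = snd s y))"

type_synonym 'a germ = "('a set \<times> ('a \<Rightarrow> real)) set"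

definition germ :: "'a set \<Rightarrow> 'a plots \<Rightarrow> 'a \<Rightarrow> ('a set \<times> ('a \<Rightarrow> real)) \<Rightarrow> 'a germ" where
  "germ X D x r = {s \<in> germ_reps X D x. germ_rel X D x r s}"

definition Gx :: "'a set \<Rightarrow> 'a plots \<Rightarrow> 'a \<Rightarrow> 'a germ set" where
  "Gx X D x = germ X D x ` germ_reps X D x"

text \<open>colimit diffeology: plots locally lift to a plot of some C^infinity(B,R)\<close>
definition G_plots :: "'a set \<Rightarrow> 'a plots \<Rightarrow> 'a \<Rightarrow> 'a germ plots" where
  "G_plots X D x n U P \<longleftrightarrow> open_Rn n U \<and> P ` U \<subseteq> Gx X D x \<and>
     (\<forall>u\<in>U. \<exists>V B q. open_Rn n V \<and> u \<in> V \<and> V \<subseteq> U \<and> B \<in> nbhds X D x \<and>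
        fun_plots B (sub_plots D B) n V q \<and> (\<forall>v\<in>V. P v = germ X D x (B, q v)))"

definition rep :: "'a germ \<Rightarrow> ('a set \<times> ('a \<Rightarrow> real))" where
  "rep g = (SOME r. r \<in> g)"

definition gadd :: "'a set \<Rightarrow> 'a plots \<Rightarrow> 'a \<Rightarrow> 'a germ \<Rightarrow> 'a germ \<Rightarrow> 'a germ" where
  "gadd X D x g h = germ X D x (fst (rep g) \<inter> fst (rep h),
     \<lambda>y. if y \<in> fst (rep g) \<inter> fst (rep h) then snd (rep g) y + snd (rep h) y else 0)"

definition gmul :: "'a set \<Rightarrow> 'a plots \<Rightarrow> 'a \<Rightarrow> 'a germ \<Rightarrow> 'a germ \<Rightarrow> 'a germ" where
  "gmul X D x g h = germ X D x (fst (rep g) \<inter> fst (rep h),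
     \<lambda>y. if y \<in> fst (rep g) \<inter> fst (rep h) then snd (rep g) y * snd (rep h) y else 0)"

definition gscale :: "'a set \<Rightarrow> 'a plots \<Rightarrow> 'a \<Rightarrow> real \<Rightarrow> 'a germ \<Rightarrow> 'a germ" where
  "gscale X D x c g = germ X D x (fst (rep g),
     \<lambda>y. if y \<in> fst (rep g) then c * snd (rep g) y else 0)"

definition gzero :: "'a set \<Rightarrow> 'a plots \<Rightarrow> 'a \<Rightarrow> 'a germ" where
  "gzero X D x = germ X D x (X, \<lambda>_. 0)"

definition gev :: "'a \<Rightarrow> 'a germ \<Rightarrow> real" where
  "gev x g = snd (rep g) x"

definition ext_tangent :: "'a set \<Rightarrow> 'a plots \<Rightarrow> 'a \<Rightarrow> ('a germ \<Rightarrow> real) set" where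
  "ext_tangent X D x = {F.
     (\<forall>g. g \<notin> Gx X D x \<longrightarrow> F g = 0) \<and>
     dsmooth (Gx X D x) (G_plots X D x) UNIV real_plots F \<and>
     (\<forall>g\<in>Gx X D x. \<forall>h\<in>Gx X D x. F (gadd X D x g h) = F g + F h) \<and>
     (\<forall>c. \<forall>g\<in>Gx X D x. F (gscale X D x c g) = c * F g) \<and>
     (\<forall>g\<in>Gx X D x. \<forall>h\<in>Gx X D x. F (gmul X D x g h) = F g * gev x h + gev x g * F h)}"

definition Ix :: "'a set \<Rightarrow> 'a plots \<Rightarrow> 'a \<Rightarrow> 'a germ set" where
  "Ix X D x = {g \<in> Gx X D x. gev x g = 0}"

definition I_plots :: "'a set \<Rightarrow> 'a plots \<Rightarrow> 'a \<Rightarrow> 'a germ plots" where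
  "I_plots X D x = sub_plots (G_plots X D x) (Ix X D x)"

text \<open>I_x^2: the ideal generated by products, i.e. finite sums of products a*b with a,b in I_x\<close>
inductive_set Ix2 :: "'a set \<Rightarrow> 'a plots \<Rightarrow> 'a \<Rightarrow> 'a germ set"
  for X :: "'a set" and D :: "'a plots" and x :: 'a where
  zero: "gzero X D x \<in> Ix2 X D x"
| step: "s \<in> Ix2 X D x \<Longrightarrow> a \<in> Ix X D x \<Longrightarrow> b \<in> Ix X D x \<Longrightarrow>
          gadd X D x s (gmul X D x a b) \<in> Ix2 X D x"

definition coset :: "'a set \<Rightarrow> 'a plots \<Rightarrow> 'a \<Rightarrow> 'a germ \<Rightarrow> 'a germ set" where
  "coset X D x g = {h \<in> Ix X D x. gadd X D x h (gscale X D x (-1) g) \<in> Ix2 X D x}"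

definition Q :: "'a set \<Rightarrow> 'a plots \<Rightarrow> 'a \<Rightarrow> 'a germ set set" where
  "Q X D x = coset X D x ` Ix X D x"

text \<open>quotient diffeology: plots locally lift to plots of I_x\<close>
definition Q_plots :: "'a set \<Rightarrow> 'a plots \<Rightarrow> 'a \<Rightarrow> 'a germ set plots" where
  "Q_plots X D x n U P \<longleftrightarrow> open_Rn n U \<and> P ` U \<subseteq> Q X D x \<and>
     (\<forall>u\<in>U. \<exists>V p. open_Rn n V \<and> u \<in> V \<and> V \<subseteq> U \<and> I_plots X D x n V p \<and>
        (\<forall>v\<in>V. P v = coset X D x (p v)))"

definition qadd :: "'a set \<Rightarrow> 'a plots \<Rightarrow> 'a \<Rightarrow> 'a germ set \<Rightarrow> 'a germ set \<Rightarrow> 'a germ set" where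
  "qadd X D x c d = coset X D x (gadd X D x (SOME g. g \<in> c) (SOME g. g \<in> d))"

definition qscale :: "'a set \<Rightarrow> 'a plots \<Rightarrow> 'a \<Rightarrow> real \<Rightarrow> 'a germ set \<Rightarrow> 'a germ set" where
  "qscale X D x r c = coset X D x (gscale X D x r (SOME g. g \<in> c))"

definition Tprime :: "'a set \<Rightarrow> 'a plots \<Rightarrow> 'a \<Rightarrow> ('a germ set \<Rightarrow> real) set" where
  "Tprime X D x = {\<phi>.
     (\<forall>c. c \<notin> Q X D x \<longrightarrow> \<phi> c = 0) \<and>
     dsmooth (Q X D x) (Q_plots X D x) UNIV real_plots \<phi> \<and>
     (\<forall>c\<in>Q X D x. \<forall>d\<in>Q X D x. \<phi> (qadd X D x c d) = \<phi> c + \<phi> d) \<and>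
     (\<forall>r. \<forall>c\<in>Q X D x. \<phi> (qscale X D x r c) = r * \<phi> c)}"

definition alpha :: "'a set \<Rightarrow> 'a plots \<Rightarrow> 'a \<Rightarrow> ('a germ \<Rightarrow> real) \<Rightarrow> ('a germ set \<Rightarrow> real)" where
  "alpha X D x F = (\<lambda>c. if c \<in> Q X D x then F (SOME g. g \<in> c) else 0)"

end

theory Submission
  imports Defs
begin


lemma DERIV_diffble: "DERIV f (0::real) :> D \<Longrightarrow> f differentiable (at 0)"
  using DERIV_deriv_iff_real_differentiable DERIV_imp_deriv by metis

lemma line_in:
  assumes "open_Rn n U" "y \<in> U" "i < n"
  shows "\<exists>e>0. \<forall>t. \<bar>t\<bar> < e \<longrightarrow> y(i := y i + t) \<in> U"
proof -
  from assms obtain e where e: "e>0" "\<forall>z\<in>Rn n. (\<forall>j<n. \<bar>z j - y j\<bar> < e) \<longrightarrow> z \<in> U"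
    unfolding open_Rn_def by blast
  have yR: "y \<in> Rn n" using assms unfolding open_Rn_def by auto
  show ?thesis
  proof (intro exI[of _ e] conjI allI impI)
    fix t :: real assume t: "\<bar>t\<bar> < e"
    have "y(i := y i + t) \<in> Rn n" using yR assms(3) by (auto simp: Rn_def)
    moreover have "\<forall>j<n. \<bar>(y(i := y i + t)) j - y j\<bar> < e" using t e by auto
    ultimately show "y(i := y i + t) \<in> U" using e by blast
  qed (rule e(1))
qed

lemma line_transfer:
  assumes "open_Rn n U" "y\<in>U" "i<n" "\<And>z. z\<in>U \<Longrightarrow> f z = g z"
    "(\<lambda>t. f (y(i := y i + t))) differentiable (at 0)"
  shows "(\<lambda>t. g (y(i := y i + t))) differentiable (at 0) \<and> partial i g y = partial i f y"
proof -
  obtain e where e: "e>0" "\<forall>t. \<bar>t\<bar><e \<longrightarrow> y(i := y i + t) \<in> U" using line_in assms by blast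
  have d: "DERIV (\<lambda>t. f (y(i := y i + t))) 0 :> partial i f y"
    using assms(5) unfolding partial_def DERIV_deriv_iff_real_differentiable .
  have d2: "DERIV (\<lambda>t. g (y(i := y i + t))) 0 :> partial i f y"
    by (rule has_field_derivative_transform_within[OF d e(1)]) (use e assms(4) in \<open>auto simp: dist_real_def\<close>)
  show ?thesis using d2 DERIV_diffble DERIV_imp_deriv unfolding partial_def by blast
qed

lemma Ck_cong: "open_Rn n U \<Longrightarrow> Ck n U k f \<Longrightarrow> (\<And>z. z\<in>U \<Longrightarrow> f z = g z) \<Longrightarrow> Ck n U k g"
proof (induction k arbitrary: f g)
  case 0 thus ?case using continuous_on_cong by (metis Ck.simps(1))
next
  case (Suc k)
  have c: "continuous_on U g" using Suc.prems continuous_on_cong by (metis Ck.simps(2))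
  have lt: "(\<lambda>t. g (y(i := y i + t))) differentiable (at 0) \<and> partial i g y = partial i f y"
    if "y\<in>U" "i<n" for y i
  proof (rule line_transfer[OF Suc.prems(1) that])
    show "\<And>z. z\<in>U \<Longrightarrow> f z = g z" by (rule Suc.prems(3))
    show "(\<lambda>t. f (y(i := y i + t))) differentiable (at 0)" using Suc.prems(2) that by simp
  qed
  have "\<forall>i<n. Ck n U k (partial i g)"
  proof (intro allI impI)
    fix i assume i: "i<n"
    show "Ck n U k (partial i g)"
      using Suc.IH[OF Suc.prems(1), of "partial i f" "partial i g"] Suc.prems(2) lt i by auto
  qed
  thus ?case using c lt by simp
qed

lemma Ck_mono: "Ck n U (Suc k) f \<Longrightarrow> Ck n U k f"
proof (induction k arbitrary: f)
  case 0 thus ?case by simp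
next
  case (Suc k) thus ?case by (metis Ck.simps(2))
qed

lemma partial_const: "partial i (\<lambda>_. c) = (\<lambda>_. 0)"
  unfolding partial_def by (auto intro!: DERIV_imp_deriv)

lemma Ck_const: "Ck n U k (\<lambda>_. c)"
proof (induction k arbitrary: c)
  case 0 thus ?case by simp
next
  case (Suc k) thus ?case by (simp add: partial_const)
qed

lemma Ck_add: "open_Rn n U \<Longrightarrow> Ck n U k f \<Longrightarrow> Ck n U k g \<Longrightarrow> Ck n U k (\<lambda>z. f z + g z)"
proof (induction k arbitrary: f g)
  case 0 thus ?case by (simp add: continuous_on_add)
next
  case (Suc k)
  have dd: "\<And>y i. y\<in>U \<Longrightarrow> i<n \<Longrightarrow> DERIV (\<lambda>t. f (y(i := y i + t)) + g (y(i := y i + t))) 0 :> partial i f y + partial i g y"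
    using Suc.prems unfolding partial_def by (auto intro!: DERIV_add simp: DERIV_deriv_iff_real_differentiable)
  have "\<forall>i<n. Ck n U k (partial i (\<lambda>z. f z + g z))"
  proof (intro allI impI)
    fix i assume i: "i<n"
    have "Ck n U k (\<lambda>z. partial i f z + partial i g z)"
      using Suc.IH[OF Suc.prems(1)] Suc.prems i by auto
    thus "Ck n U k (partial i (\<lambda>z. f z + g z))"
      by (rule Ck_cong[OF Suc.prems(1)]) (use dd i in \<open>auto simp: partial_def intro: DERIV_imp_deriv[symmetric]\<close>)
  qed
  thus ?case using Suc.prems dd DERIV_diffble by (auto intro: continuous_on_add)
qed

lemma Ck_mult: "open_Rn n U \<Longrightarrow> Ck n U k f \<Longrightarrow> Ck n U k g \<Longrightarrow> Ck n U k (\<lambda>z. f z * g z)"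
proof (induction k arbitrary: f g)
  case 0 thus ?case by (simp add: continuous_on_mult)
next
  case (Suc k)
  have dd: "\<And>y i. y\<in>U \<Longrightarrow> i<n \<Longrightarrow> DERIV (\<lambda>t. f (y(i := y i + t)) * g (y(i := y i + t))) 0 :> partial i f y * g y + partial i g y * f y"
  proof -
    fix y i assume a: "y\<in>U" "i<n"
    have f1: "DERIV (\<lambda>t. f (y(i := y i + t))) 0 :> partial i f y"
      using Suc.prems a unfolding partial_def by (simp add: DERIV_deriv_iff_real_differentiable)
    have g1: "DERIV (\<lambda>t. g (y(i := y i + t))) 0 :> partial i g y"
      using Suc.prems a unfolding partial_def by (simp add: DERIV_deriv_iff_real_differentiable)
    show "?thesis y i" using DERIV_mult[OF f1 g1] by simp
  qed
  have "\<forall>i<n. Ck n U k (partial i (\<lambda>z. f z * g z))"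
  proof (intro allI impI)
    fix i assume i: "i<n"
    have fk: "Ck n U k f" "Ck n U k g" using Suc.prems Ck_mono by blast+
    have "Ck n U k (\<lambda>z. partial i f z * g z + partial i g z * f z)"
      using Suc.IH[OF Suc.prems(1)] Suc.prems i fk Ck_add[OF Suc.prems(1)] by auto
    thus "Ck n U k (partial i (\<lambda>z. f z * g z))"
      by (rule Ck_cong[OF Suc.prems(1)]) (use dd i in \<open>auto simp: partial_def intro: DERIV_imp_deriv[symmetric]\<close>)
  qed
  thus ?case using Suc.prems dd DERIV_diffble by (auto intro: continuous_on_mult)
qed

lemma open_box: "open {z::nat\<Rightarrow>real. \<forall>i<n. \<bar>z i - y i\<bar> < e}"
proof -
  have "{z::nat\<Rightarrow>real. \<forall>i<n. \<bar>z i - y i\<bar> < e} = (\<Inter>i\<in>{..<n}. {z. \<bar>z i - y i\<bar> < e})" by auto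
  moreover have "open {z::nat\<Rightarrow>real. \<bar>z i - y i\<bar> < e}" for i
    by (rule open_Collect_less) (auto intro!: continuous_intros)
  ultimately show ?thesis by auto
qed

lemma cont_local:
  assumes "open_Rn n U" "\<forall>y\<in>U. \<exists>V. open_Rn n V \<and> y\<in>V \<and> V\<subseteq>U \<and> continuous_on V f"
  shows "continuous_on U f"
  unfolding continuous_on_eq_continuous_within
proof
  fix y assume y: "y \<in> U"
  then obtain V where V: "open_Rn n V" "y\<in>V" "V\<subseteq>U" "continuous_on V f" using assms by blast
  obtain e where e: "e>0" "\<forall>z\<in>Rn n. (\<forall>j<n. \<bar>z j - y j\<bar> < e) \<longrightarrow> z \<in> V"
    using V unfolding open_Rn_def by blast
  have UR: "U \<subseteq> Rn n" using assms unfolding open_Rn_def by auto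
  let ?S = "{z::nat\<Rightarrow>real. \<forall>i<n. \<bar>z i - y i\<bar> < e}"
  have "at y within V = at y within U"
    by (rule at_within_nhd[of _ ?S]) (use e UR V open_box in auto)
  moreover have "continuous (at y within V) f" using V continuous_on_eq_continuous_within by blast
  ultimately show "continuous (at y within U) f" by simp
qed

lemma Ck_local:
  "open_Rn n U \<Longrightarrow> \<forall>y\<in>U. \<exists>V. open_Rn n V \<and> y\<in>V \<and> V\<subseteq>U \<and> Ck n V k f \<Longrightarrow> Ck n U k f"
proof (induction k arbitrary: f)
  case 0 thus ?case using cont_local by simp
next
  case (Suc k)
  have c: "continuous_on U f" using cont_local[OF Suc.prems(1)] Suc.prems(2) by (metis Ck.simps(2))
  have d: "\<forall>y\<in>U. \<forall>i<n. (\<lambda>t. f (y(i := y i + t))) differentiable (at 0)"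
    using Suc.prems(2) by (metis Ck.simps(2) subsetD)
  have "\<forall>i<n. Ck n U k (partial i f)"
    using Suc.IH[OF Suc.prems(1)] Suc.prems(2) by (metis Ck.simps(2))
  thus ?case using c d by simp
qed

lemma smooth_cong: "open_Rn n U \<Longrightarrow> smooth_fun n U f \<Longrightarrow> (\<And>z. z\<in>U \<Longrightarrow> f z = g z) \<Longrightarrow> smooth_fun n U g"
  unfolding smooth_fun_def using Ck_cong by blast
lemma smooth_const: "smooth_fun n U (\<lambda>_. c)"
  unfolding smooth_fun_def using Ck_const by blast
lemma smooth_add: "open_Rn n U \<Longrightarrow> smooth_fun n U f \<Longrightarrow> smooth_fun n U g \<Longrightarrow> smooth_fun n U (\<lambda>z. f z + g z)"
  unfolding smooth_fun_def using Ck_add by blast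
lemma smooth_mult: "open_Rn n U \<Longrightarrow> smooth_fun n U f \<Longrightarrow> smooth_fun n U g \<Longrightarrow> smooth_fun n U (\<lambda>z. f z * g z)"
  unfolding smooth_fun_def using Ck_mult by blast
lemma smooth_diff: "open_Rn n U \<Longrightarrow> smooth_fun n U f \<Longrightarrow> smooth_fun n U g \<Longrightarrow> smooth_fun n U (\<lambda>z. f z - g z)"
proof -
  assume a: "open_Rn n U" "smooth_fun n U f" "smooth_fun n U g"
  have "smooth_fun n U (\<lambda>z. f z + (-1) * g z)"
    by (intro smooth_add smooth_mult smooth_const a)
  thus ?thesis by (rule smooth_cong[OF a(1)]) simp
qed
lemma smooth_local:
  "open_Rn n U \<Longrightarrow> \<forall>y\<in>U. \<exists>V. open_Rn n V \<and> y\<in>V \<and> V\<subseteq>U \<and> smooth_fun n V f \<Longrightarrow> smooth_fun n U f"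
  unfolding smooth_fun_def using Ck_local by (metis (no_types, lifting))

lemma real_plots_cong: "real_plots n U f \<Longrightarrow> (\<And>z. z\<in>U \<Longrightarrow> f z = g z) \<Longrightarrow> real_plots n U g"
  unfolding real_plots_def using smooth_cong by blast
lemma real_plots_local:
  "open_Rn n U \<Longrightarrow> \<forall>y\<in>U. \<exists>V. open_Rn n V \<and> y\<in>V \<and> V\<subseteq>U \<and> real_plots n V f \<Longrightarrow> real_plots n U f"
  unfolding real_plots_def using smooth_local by blast



lemma open_Rn_Int: "open_Rn n A \<Longrightarrow> open_Rn n B \<Longrightarrow> open_Rn n (A\<inter>B)"
  unfolding open_Rn_def
proof (intro conjI ballI)
  assume a: "A \<subseteq> Rn n \<and> (\<forall>y\<in>A. \<exists>e>0. \<forall>z\<in>Rn n. (\<forall>i<n. \<bar>z i - y i\<bar> < e) \<longrightarrow> z \<in> A)"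
     and b: "B \<subseteq> Rn n \<and> (\<forall>y\<in>B. \<exists>e>0. \<forall>z\<in>Rn n. (\<forall>i<n. \<bar>z i - y i\<bar> < e) \<longrightarrow> z \<in> B)"
  show "A \<inter> B \<subseteq> Rn n" using a by auto
  fix y assume y: "y \<in> A \<inter> B"
  obtain e1 where e1: "e1>0" "\<forall>z\<in>Rn n. (\<forall>i<n. \<bar>z i - y i\<bar> < e1) \<longrightarrow> z \<in> A" using a y by blast
  obtain e2 where e2: "e2>0" "\<forall>z\<in>Rn n. (\<forall>i<n. \<bar>z i - y i\<bar> < e2) \<longrightarrow> z \<in> B" using b y by blast
  show "\<exists>e>0. \<forall>z\<in>Rn n. (\<forall>i<n. \<bar>z i - y i\<bar> < e) \<longrightarrow> z \<in> A \<inter> B"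
    by (rule exI[of _ "min e1 e2"]) (use e1 e2 in auto)
qed

locale pt =
  fixes X :: "'a set" and D :: "'a plots" and x :: 'a
  assumes dif: "diffeology X D" and xX: "x \<in> X"
begin

abbreviation "R \<equiv> germ_reps X D x"
abbreviation "G \<equiv> Gx X D x"
abbreviation "N \<equiv> nbhds X D x"
abbreviation "I \<equiv> Ix X D x"
abbreviation "I2 \<equiv> Ix2 X D x"
abbreviation "add \<equiv> gadd X D x"
abbreviation "mul \<equiv> gmul X D x"
abbreviation "sc \<equiv> gscale X D x"
abbreviation "zero \<equiv> gzero X D x"
abbreviation "cs \<equiv> coset X D x"

definition nx :: "'a filter" where "nx = (INF W\<in>nbhds X D x. principal W)"
definition gone where "gone = germ X D x (X, \<lambda>y. if y \<in> X then 1 else 0)"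
definition val where "val g = snd (rep g)"

lemma dif1: "\<forall>n U p. D n U p \<longrightarrow> open_Rn n U \<and> p ` U \<subseteq> X"
  using dif unfolding diffeology_def by (rule conjunct1)
lemma dif2: "\<forall>n U y. open_Rn n U \<and> y \<in> X \<longrightarrow> D n U (\<lambda>_. y)"
  using dif unfolding diffeology_def by (rule conjunct1[OF conjunct2])
lemma plot_open: "D n U p \<Longrightarrow> open_Rn n U" using dif1 by blast
lemma plot_img: "D n U p \<Longrightarrow> p ` U \<subseteq> X" using dif1 by blast
lemma plot_const: "open_Rn n U \<Longrightarrow> y \<in> X \<Longrightarrow> D n U (\<lambda>_. y)" using dif2 by blast

lemma Dopen_X: "D_open X D X"
proof -
  have "{u\<in>U. p u \<in> X} = U" if "D n U p" for n U p using plot_img[OF that] by auto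
  thus ?thesis unfolding D_open_def using plot_open by auto
qed

lemma Dopen_Int: "D_open X D A \<Longrightarrow> D_open X D B \<Longrightarrow> D_open X D (A\<inter>B)"
proof -
  assume a: "D_open X D A" "D_open X D B"
  have "open_Rn n {u\<in>U. p u \<in> A\<inter>B}" if "D n U p" for n U p
  proof -
    have 1: "open_Rn n {u\<in>U. p u \<in> A}" using a(1) that unfolding D_open_def by auto
    have 2: "open_Rn n {u\<in>U. p u \<in> B}" using a(2) that unfolding D_open_def by auto
    have "{u\<in>U. p u \<in> A\<inter>B} = {u\<in>U. p u \<in> A} \<inter> {u\<in>U. p u \<in> B}" by auto
    thus ?thesis using open_Rn_Int[OF 1 2] by simp
  qed
  moreover have "A \<inter> B \<subseteq> X" using a unfolding D_open_def by auto
  ultimately show ?thesis unfolding D_open_def by simp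
qed

lemma N_X: "X \<in> N" using Dopen_X xX unfolding nbhds_def by auto
lemma N_Int: "A \<in> N \<Longrightarrow> B \<in> N \<Longrightarrow> A \<inter> B \<in> N" using Dopen_Int unfolding nbhds_def by auto
lemma N_x: "W \<in> N \<Longrightarrow> x \<in> W" unfolding nbhds_def by auto

lemma eventually_nx: "eventually P nx \<longleftrightarrow> (\<exists>W\<in>N. \<forall>y\<in>W. P y)"
proof -
  have ne: "N \<noteq> {}" using N_X by blast
  have dir: "\<exists>c\<in>N. principal c \<le> inf (principal a) (principal b)" if "a \<in> N" "b \<in> N" for a b
    using that N_Int by (intro bexI[of _ "a\<inter>b"]) auto
  show ?thesis unfolding nx_def
    by (subst eventually_INF_base[OF ne dir]) (auto simp: eventually_principal)
qed

lemma ev_x: "eventually P nx \<Longrightarrow> P x" using eventually_nx N_x by blast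
lemma ev_N: "W \<in> N \<Longrightarrow> eventually (\<lambda>y. y \<in> W) nx" using eventually_nx by blast

lemma Cinf_iff: "f \<in> Cinf B (sub_plots D B) \<longleftrightarrow> (\<forall>y. y\<notin>B \<longrightarrow> f y = 0) \<and>
   (\<forall>n U p. D n U p \<and> p`U \<subseteq> B \<longrightarrow> real_plots n U (f\<circ>p))"
  by (auto simp: Cinf_def dsmooth_def sub_plots_def)

lemma Cinf_add: assumes "f \<in> Cinf B1 (sub_plots D B1)" "g \<in> Cinf B2 (sub_plots D B2)" shows
  "(\<lambda>y. if y\<in>B1\<inter>B2 then f y + g y else 0) \<in> Cinf (B1\<inter>B2) (sub_plots D (B1\<inter>B2))"
proof (unfold Cinf_iff, intro conjI allI impI)
  fix n U p assume "D n U p \<and> p ` U \<subseteq> B1 \<inter> B2"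
  note a = assms this
  hence "real_plots n U (f\<circ>p)" "real_plots n U (g\<circ>p)" unfolding Cinf_iff by auto
  hence "real_plots n U (\<lambda>u. f (p u) + g (p u))" unfolding real_plots_def comp_def using smooth_add by auto
  thus "real_plots n U ((\<lambda>y. if y\<in>B1\<inter>B2 then f y + g y else 0) \<circ> p)"
    by (rule real_plots_cong) (use a in auto)
qed (use assms in \<open>auto simp: Cinf_iff\<close>)

lemma Cinf_mul: assumes "f \<in> Cinf B1 (sub_plots D B1)" "g \<in> Cinf B2 (sub_plots D B2)" shows
  "(\<lambda>y. if y\<in>B1\<inter>B2 then f y * g y else 0) \<in> Cinf (B1\<inter>B2) (sub_plots D (B1\<inter>B2))"
proof (unfold Cinf_iff, intro conjI allI impI)
  fix n U p assume "D n U p \<and> p ` U \<subseteq> B1 \<inter> B2"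
  note a = assms this
  hence "real_plots n U (f\<circ>p)" "real_plots n U (g\<circ>p)" unfolding Cinf_iff by auto
  hence "real_plots n U (\<lambda>u. f (p u) * g (p u))" unfolding real_plots_def comp_def using smooth_mult by auto
  thus "real_plots n U ((\<lambda>y. if y\<in>B1\<inter>B2 then f y * g y else 0) \<circ> p)"
    by (rule real_plots_cong) (use a in auto)
qed (use assms in \<open>auto simp: Cinf_iff\<close>)

lemma Cinf_scale: assumes "f \<in> Cinf B (sub_plots D B)" shows
  "(\<lambda>y. if y\<in>B then c * f y else 0) \<in> Cinf B (sub_plots D B)"
proof (unfold Cinf_iff, intro conjI allI impI)
  fix n U p assume "D n U p \<and> p ` U \<subseteq> B"
  note a = assms this
  hence "real_plots n U (f\<circ>p)" unfolding Cinf_iff by auto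
  hence "real_plots n U (\<lambda>u. c * f (p u))" unfolding real_plots_def comp_def using smooth_mult smooth_const by auto
  thus "real_plots n U ((\<lambda>y. if y\<in>B then c * f y else 0) \<circ> p)"
    by (rule real_plots_cong) (use a in auto)
qed (use assms in \<open>auto simp: Cinf_iff\<close>)

lemma Cinf_subc: assumes "f \<in> Cinf B (sub_plots D B)" shows
  "(\<lambda>y. if y\<in>B then f y - c else 0) \<in> Cinf B (sub_plots D B)"
proof (unfold Cinf_iff, intro conjI allI impI)
  fix n U p assume "D n U p \<and> p ` U \<subseteq> B"
  note a = assms this
  hence "real_plots n U (f\<circ>p)" unfolding Cinf_iff by auto
  hence "real_plots n U (\<lambda>u. f (p u) - c)" unfolding real_plots_def comp_def using smooth_diff smooth_const by auto
  thus "real_plots n U ((\<lambda>y. if y\<in>B then f y - c else 0) \<circ> p)"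
    by (rule real_plots_cong) (use a in auto)
qed (use assms in \<open>auto simp: Cinf_iff\<close>)

lemma Cinf_const: "(\<lambda>y. if y\<in>B then c else 0) \<in> Cinf B (sub_plots D B)"
proof (unfold Cinf_iff, intro conjI allI impI)
  fix n U p assume a: "D n U p \<and> p ` U \<subseteq> B"
  have "real_plots n U (\<lambda>u. c)" unfolding real_plots_def comp_def using smooth_const plot_open a by auto
  thus "real_plots n U ((\<lambda>y. if y\<in>B then c else 0) \<circ> p)"
    by (rule real_plots_cong) (use a in auto)
qed (auto simp: Cinf_iff)

lemma Cinf_zero: "(\<lambda>_. 0) \<in> Cinf B (sub_plots D B)"
  using Cinf_const[of B 0] by (simp add: if_distrib cong: if_cong)

lemma R_iff: "r \<in> R \<longleftrightarrow> fst r \<in> N \<and> snd r \<in> Cinf (fst r) (sub_plots D (fst r))"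
  by (cases r) (auto simp: germ_reps_def)

lemma rel_ev: "germ_rel X D x r s \<longleftrightarrow> eventually (\<lambda>y. y\<in>fst r \<and> y\<in>fst s \<and> snd r y = snd s y) nx"
  unfolding germ_rel_def eventually_nx
proof
  assume "\<exists>W\<in>N. W \<subseteq> fst r \<inter> fst s \<and> (\<forall>y\<in>W. snd r y = snd s y)"
  then obtain W where "W \<in> N" "W \<subseteq> fst r \<inter> fst s" "\<forall>y\<in>W. snd r y = snd s y" by (elim bexE conjE)
  thus "\<exists>W\<in>N. \<forall>y\<in>W. y \<in> fst r \<and> y \<in> fst s \<and> snd r y = snd s y" by (intro bexI[of _ W]) auto
next
  assume "\<exists>W\<in>N. \<forall>y\<in>W. y \<in> fst r \<and> y \<in> fst s \<and> snd r y = snd s y"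
  then obtain W where "W \<in> N" "\<forall>y\<in>W. y \<in> fst r \<and> y \<in> fst s \<and> snd r y = snd s y" by (elim bexE)
  thus "\<exists>W\<in>N. W \<subseteq> fst r \<inter> fst s \<and> (\<forall>y\<in>W. snd r y = snd s y)" by (intro bexI[of _ W]) auto
qed

lemma germ_self: assumes "r\<in>R" shows "r \<in> germ X D x r"
proof -
  have "eventually (\<lambda>y. y \<in> fst r) nx" using ev_N[of "fst r"] assms R_iff[of r] by simp
  hence "germ_rel X D x r r" unfolding rel_ev by (rule eventually_mono) simp
  thus ?thesis unfolding germ_def using assms by simp
qed

lemma germ_eq_rel: assumes "germ_rel X D x r s" shows "germ X D x r = germ X D x s"
proof -
  have "germ_rel X D x r t \<longleftrightarrow> germ_rel X D x s t" for t
  proof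
    assume "germ_rel X D x r t"
    thus "germ_rel X D x s t" using assms unfolding rel_ev by (rule eventually_elim2) metis
  next
    assume "germ_rel X D x s t"
    thus "germ_rel X D x r t" using assms unfolding rel_ev by (rule eventually_elim2) metis
  qed
  thus ?thesis unfolding germ_def by (intro Collect_cong) simp
qed

lemma rep_germ: "r \<in> R \<Longrightarrow> rep (germ X D x r) \<in> R \<and> germ_rel X D x r (rep (germ X D x r))"
proof -
  assume r: "r \<in> R"
  have "rep (germ X D x r) \<in> germ X D x r" unfolding rep_def by (rule someI[of "\<lambda>s. s \<in> germ X D x r", OF germ_self[OF r]])
  thus ?thesis unfolding germ_def by auto
qed

lemma G_rep: assumes "g \<in> G" shows "rep g \<in> R \<and> germ X D x (rep g) = g"
proof -
  obtain r where r: "r\<in>R" "g = germ X D x r" using assms unfolding Gx_def by blast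
  show ?thesis using rep_germ[OF r(1)] germ_eq_rel[of r "rep (germ X D x r)"] r(2) by simp
qed

lemma germ_in: "r \<in> R \<Longrightarrow> germ X D x r \<in> G" unfolding Gx_def by auto

lemma G_dom: "g \<in> G \<Longrightarrow> eventually (\<lambda>y. y \<in> fst (rep g)) nx"
  using G_rep[of g] R_iff[of "rep g"] ev_N[of "fst (rep g)"] by simp

definition approx where "approx g f \<longleftrightarrow> g \<in> G \<and> eventually (\<lambda>y. val g y = f y) nx"

lemma ap_germ: assumes r: "r \<in> R" shows "approx (germ X D x r) (snd r)"
proof -
  have "germ_rel X D x r (rep (germ X D x r))" using rep_germ[OF r] by simp
  hence ev: "eventually (\<lambda>y. y\<in>fst r \<and> y\<in>fst (rep (germ X D x r)) \<and> snd r y = snd (rep (germ X D x r)) y) nx"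
    unfolding rel_ev .
  show ?thesis unfolding approx_def val_def
    by (rule conjI, rule germ_in[OF r], rule eventually_mono[OF ev]) simp
qed

lemma ap_val: "g \<in> G \<Longrightarrow> approx g (val g)" unfolding approx_def by simp

lemma ap_cong: assumes a: "approx g f" "eventually (\<lambda>y. f y = k y) nx" shows "approx g k"
proof -
  have g: "g \<in> G" and e: "eventually (\<lambda>y. val g y = f y) nx" using a(1) unfolding approx_def by auto
  have "eventually (\<lambda>y. val g y = k y) nx" using e a(2) by eventually_elim simp
  thus ?thesis using g unfolding approx_def by simp
qed

lemma ap_eq: assumes a: "approx g f" "approx h k" "eventually (\<lambda>y. f y = k y) nx" shows "g = h"
proof -
  have g: "g \<in> G" and h: "h \<in> G" and eg: "eventually (\<lambda>y. snd (rep g) y = f y) nx"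
    and eh: "eventually (\<lambda>y. snd (rep h) y = k y) nx" using a unfolding approx_def val_def by auto
  have rr: "germ_rel X D x (rep g) (rep h)" unfolding rel_ev
    using G_dom[OF g] G_dom[OF h] eg eh a(3) by eventually_elim auto
  show ?thesis using germ_eq_rel[OF rr] G_rep[OF g] G_rep[OF h] by simp
qed

lemma ap_eq': assumes "approx g f" "approx h k" "\<And>y. f y = k y" shows "g = h"
  using ap_eq[OF assms(1,2)] assms(3) by simp

lemma ap_ev: "approx g f \<Longrightarrow> gev x g = f x"
  unfolding approx_def gev_def val_def using ev_x by auto

lemma ap_add: assumes a: "approx g f" "approx h k" shows "approx (add g h) (\<lambda>y. f y + k y)"
proof -
  have g: "g \<in> G" and h: "h \<in> G" and eg: "eventually (\<lambda>y. snd (rep g) y = f y) nx"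
    and eh: "eventually (\<lambda>y. snd (rep h) y = k y) nx" using a unfolding approx_def val_def by auto
  let ?r = "(fst (rep g) \<inter> fst (rep h), \<lambda>y. if y \<in> fst (rep g) \<inter> fst (rep h) then snd (rep g) y + snd (rep h) y else 0)"
  have "?r \<in> R" unfolding R_iff fst_conv snd_conv using G_rep[OF g] G_rep[OF h] R_iff
    by (intro conjI N_Int Cinf_add) auto
  hence "approx (add g h) (snd ?r)" unfolding gadd_def by (rule ap_germ)
  moreover have "eventually (\<lambda>y. snd ?r y = f y + k y) nx"
    using G_dom[OF g] G_dom[OF h] eg eh by eventually_elim auto
  ultimately show ?thesis by (rule ap_cong)
qed

lemma ap_mul: assumes a: "approx g f" "approx h k" shows "approx (mul g h) (\<lambda>y. f y * k y)"
proof -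
  have g: "g \<in> G" and h: "h \<in> G" and eg: "eventually (\<lambda>y. snd (rep g) y = f y) nx"
    and eh: "eventually (\<lambda>y. snd (rep h) y = k y) nx" using a unfolding approx_def val_def by auto
  let ?r = "(fst (rep g) \<inter> fst (rep h), \<lambda>y. if y \<in> fst (rep g) \<inter> fst (rep h) then snd (rep g) y * snd (rep h) y else 0)"
  have "?r \<in> R" unfolding R_iff fst_conv snd_conv using G_rep[OF g] G_rep[OF h] R_iff
    by (intro conjI N_Int Cinf_mul) auto
  hence "approx (mul g h) (snd ?r)" unfolding gmul_def by (rule ap_germ)
  moreover have "eventually (\<lambda>y. snd ?r y = f y * k y) nx"
    using G_dom[OF g] G_dom[OF h] eg eh by eventually_elim auto
  ultimately show ?thesis by (rule ap_cong)
qed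

lemma ap_sc: assumes a: "approx g f" shows "approx (sc c g) (\<lambda>y. c * f y)"
proof -
  have g: "g \<in> G" and eg: "eventually (\<lambda>y. snd (rep g) y = f y) nx"
    using a unfolding approx_def val_def by auto
  let ?r = "(fst (rep g), \<lambda>y. if y \<in> fst (rep g) then c * snd (rep g) y else 0)"
  have "?r \<in> R" unfolding R_iff fst_conv snd_conv using G_rep[OF g] R_iff
    by (intro conjI Cinf_scale) auto
  hence "approx (sc c g) (snd ?r)" unfolding gscale_def by (rule ap_germ)
  moreover have "eventually (\<lambda>y. snd ?r y = c * f y) nx"
    using G_dom[OF g] eg by eventually_elim auto
  ultimately show ?thesis by (rule ap_cong)
qed

lemma ap_zero: "approx zero (\<lambda>_. 0)"
proof -
  have "(X, \<lambda>_. 0) \<in> R" unfolding R_iff fst_conv snd_conv by (intro conjI N_X Cinf_zero)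
  thus ?thesis unfolding gzero_def using ap_germ by fastforce
qed

lemma ap_one: "approx gone (\<lambda>_. 1)"
proof -
  have "(X, \<lambda>y. if y \<in> X then 1 else 0) \<in> R" unfolding R_iff fst_conv snd_conv by (intro conjI N_X Cinf_const)
  hence "approx gone (\<lambda>y. if y \<in> X then 1 else 0)"
    unfolding gone_def using ap_germ by fastforce
  moreover have "eventually (\<lambda>y. (if y \<in> X then 1 else 0) = (1::real)) nx"
    using ev_N[OF N_X] by (rule eventually_mono) simp
  ultimately show ?thesis by (rule ap_cong)
qed

lemma ap_G: "approx g f \<Longrightarrow> g \<in> G" unfolding approx_def by simp

lemmas ap_rules = ap_add ap_mul ap_sc ap_zero ap_one ap_val

end

context pt begin

lemma ev_val: "g \<in> G \<Longrightarrow> gev x g = val g x" unfolding gev_def val_def by simp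
lemma Ix_iff: "g \<in> I \<longleftrightarrow> g \<in> G \<and> gev x g = 0" unfolding Ix_def by simp

lemma G_add: "a \<in> G \<Longrightarrow> b \<in> G \<Longrightarrow> add a b \<in> G" using ap_G ap_add ap_val by blast
lemma G_mul: "a \<in> G \<Longrightarrow> b \<in> G \<Longrightarrow> mul a b \<in> G" using ap_G ap_mul ap_val by blast
lemma G_sc: "a \<in> G \<Longrightarrow> sc c a \<in> G" using ap_G ap_sc ap_val by blast
lemma G_zero: "zero \<in> G" using ap_G ap_zero by blast
lemma G_one: "gone \<in> G" using ap_G ap_one by blast

lemma ev_add: "a \<in> G \<Longrightarrow> b \<in> G \<Longrightarrow> gev x (add a b) = gev x a + gev x b"
  using ap_ev[OF ap_add[OF ap_val ap_val]] ev_val by simp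
lemma ev_mul: "a \<in> G \<Longrightarrow> b \<in> G \<Longrightarrow> gev x (mul a b) = gev x a * gev x b"
  using ap_ev[OF ap_mul[OF ap_val ap_val]] ev_val by simp
lemma ev_sc: "a \<in> G \<Longrightarrow> gev x (sc c a) = c * gev x a"
  using ap_ev[OF ap_sc[OF ap_val]] ev_val by simp
lemma ev_zero: "gev x zero = 0" using ap_ev[OF ap_zero] by simp
lemma ev_one: "gev x gone = 1" using ap_ev[OF ap_one] by simp

lemma I_G: "a \<in> I \<Longrightarrow> a \<in> G" unfolding Ix_iff by simp
lemma I_add: "a \<in> I \<Longrightarrow> b \<in> I \<Longrightarrow> add a b \<in> I" unfolding Ix_iff using G_add ev_add by simp
lemma I_sc: "a \<in> I \<Longrightarrow> sc c a \<in> I" unfolding Ix_iff using G_sc ev_sc by simp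
lemma I_mul: "a \<in> I \<Longrightarrow> b \<in> G \<Longrightarrow> mul a b \<in> I" unfolding Ix_iff using G_mul ev_mul by simp
lemma I_zero: "zero \<in> I" unfolding Ix_iff using G_zero ev_zero by simp

lemmas apr = ap_add ap_mul ap_sc ap_zero ap_one

lemma id1: "a \<in> G \<Longrightarrow> add a (sc (-1) a) = zero"
  by (rule ap_eq'[OF ap_add[OF ap_val ap_sc[OF ap_val]] ap_zero]) simp_all
lemma id2: "a \<in> G \<Longrightarrow> add a zero = a"
  by (rule ap_eq'[OF ap_add[OF ap_val ap_zero] ap_val]) simp_all
lemma id3: "a \<in> G \<Longrightarrow> b \<in> G \<Longrightarrow> c \<in> G \<Longrightarrow> add a (add b c) = add (add a b) c"
  by (rule ap_eq'[OF ap_add[OF ap_val ap_add[OF ap_val ap_val]] ap_add[OF ap_add[OF ap_val ap_val] ap_val]]) simp_all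
lemma id4: "sc c zero = zero"
  by (rule ap_eq'[OF ap_sc[OF ap_zero] ap_zero]) simp_all
lemma id5: "s \<in> G \<Longrightarrow> a \<in> G \<Longrightarrow> b \<in> G \<Longrightarrow> sc c (add s (mul a b)) = add (sc c s) (mul (sc c a) b)"
  by (rule ap_eq'[OF ap_sc[OF ap_add[OF ap_val ap_mul[OF ap_val ap_val]]] ap_add[OF ap_sc[OF ap_val] ap_mul[OF ap_sc[OF ap_val] ap_val]]])
     (simp_all add: algebra_simps)
lemma id6: "a \<in> G \<Longrightarrow> b \<in> G \<Longrightarrow> add zero (mul a b) = mul a b"
  by (rule ap_eq'[OF ap_add[OF ap_zero ap_mul[OF ap_val ap_val]] ap_mul[OF ap_val ap_val]]) simp_all
lemma id7: "h \<in> G \<Longrightarrow> a \<in> G \<Longrightarrow> b \<in> G \<Longrightarrow>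
  add (add h (sc (-1) b)) (add b (sc (-1) a)) = add h (sc (-1) a)"
  by (rule ap_eq'[OF ap_add[OF ap_add[OF ap_val ap_sc[OF ap_val]] ap_add[OF ap_val ap_sc[OF ap_val]]] ap_add[OF ap_val ap_sc[OF ap_val]]])
     simp_all
lemma id8: "h \<in> G \<Longrightarrow> a \<in> G \<Longrightarrow> b \<in> G \<Longrightarrow>
  add (add h (sc (-1) a)) (sc (-1) (add b (sc (-1) a))) = add h (sc (-1) b)"
  by (rule ap_eq'[OF ap_add[OF ap_add[OF ap_val ap_sc[OF ap_val]] ap_sc[OF ap_add[OF ap_val ap_sc[OF ap_val]]]] ap_add[OF ap_val ap_sc[OF ap_val]]])
     simp_all
lemma id9: "a \<in> G \<Longrightarrow> b \<in> G \<Longrightarrow> a' \<in> G \<Longrightarrow> b' \<in> G \<Longrightarrow>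
  add (add a' b') (sc (-1) (add a b)) = add (add a' (sc (-1) a)) (add b' (sc (-1) b))"
  by (rule ap_eq'[OF ap_add[OF ap_add[OF ap_val ap_val] ap_sc[OF ap_add[OF ap_val ap_val]]]
        ap_add[OF ap_add[OF ap_val ap_sc[OF ap_val]] ap_add[OF ap_val ap_sc[OF ap_val]]]])
     simp_all
lemma id10: "a \<in> G \<Longrightarrow> a' \<in> G \<Longrightarrow>
  add (sc r a') (sc (-1) (sc r a)) = sc r (add a' (sc (-1) a))"
  by (rule ap_eq'[OF ap_add[OF ap_sc[OF ap_val] ap_sc[OF ap_sc[OF ap_val]]] ap_sc[OF ap_add[OF ap_val ap_sc[OF ap_val]]]])
     (simp_all add: algebra_simps)
lemma id11: "a \<in> G \<Longrightarrow> add a (sc (-1) zero) = a"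
  by (rule ap_eq'[OF ap_add[OF ap_val ap_sc[OF ap_zero]] ap_val]) simp_all
lemma id12: "mul gone gone = gone"
  by (rule ap_eq'[OF ap_mul[OF ap_one ap_one] ap_one]) simp_all
lemma id13: "a \<in> G \<Longrightarrow> add a (sc 0 gone) = a"
  by (rule ap_eq'[OF ap_add[OF ap_val ap_sc[OF ap_one]] ap_val]) simp_all
lemma id14: "sc 0 zero = zero" by (rule id4)

lemma I2_I: "s \<in> I2 \<Longrightarrow> s \<in> I"
proof (induction s rule: Ix2.induct)
  case zero thus ?case by (rule I_zero)
next
  case (step s a b) thus ?case using I_add I_mul I_G by simp
qed

lemma I2_add: "t \<in> I2 \<Longrightarrow> s \<in> I2 \<Longrightarrow> add s t \<in> I2"
proof (induction t rule: Ix2.induct)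
  case zero thus ?case using id2 I2_I I_G by simp
next
  case (step t a b)
  have "add s (add t (mul a b)) = add (add s t) (mul a b)"
    using id3 step I2_I I_G G_mul by simp
  thus ?case using step Ix2.step by simp
qed

lemma I2_sc: "s \<in> I2 \<Longrightarrow> sc c s \<in> I2"
proof (induction s rule: Ix2.induct)
  case zero thus ?case using id4 Ix2.zero by simp
next
  case (step s a b)
  have "sc c (add s (mul a b)) = add (sc c s) (mul (sc c a) b)"
    using id5 step I2_I I_G by simp
  thus ?case using Ix2.step[OF step.IH I_sc[OF step.hyps(2)] step.hyps(3)] by simp
qed

lemma I2_mul: "a \<in> I \<Longrightarrow> b \<in> I \<Longrightarrow> mul a b \<in> I2"
  using Ix2.step[OF Ix2.zero] id6 I_G by metis

lemma cs_iff: "h \<in> cs a \<longleftrightarrow> h \<in> I \<and> add h (sc (-1) a) \<in> I2"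
  unfolding coset_def by simp

lemma C1: "a \<in> I \<Longrightarrow> a \<in> cs a"
  unfolding cs_iff using id1 I_G Ix2.zero by simp

lemma C2: assumes "b \<in> cs a" "a \<in> I" shows "cs b = cs a"
proof -
  have b: "b \<in> I" and ba: "add b (sc (-1) a) \<in> I2" using assms cs_iff by auto
  have "h \<in> cs b \<longleftrightarrow> h \<in> cs a" for h
  proof
    assume "h \<in> cs b"
    hence h: "h \<in> I" and hb: "add h (sc (-1) b) \<in> I2" using cs_iff by auto
    have "add (add h (sc (-1) b)) (add b (sc (-1) a)) \<in> I2" using I2_add[OF ba hb] .
    thus "h \<in> cs a" using id7 h b assms(2) I_G cs_iff by simp
  next
    assume "h \<in> cs a"
    hence h: "h \<in> I" and ha: "add h (sc (-1) a) \<in> I2" using cs_iff by auto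
    have "add (add h (sc (-1) a)) (sc (-1) (add b (sc (-1) a))) \<in> I2" using I2_add[OF I2_sc[OF ba] ha] .
    thus "h \<in> cs b" using id8 h b assms(2) I_G cs_iff by simp
  qed
  thus ?thesis by blast
qed

lemma C3: "a \<in> I \<Longrightarrow> (SOME g. g \<in> cs a) \<in> cs a"
  using C1 by (rule someI)

lemma C4: "a \<in> I \<Longrightarrow> cs (SOME g. g \<in> cs a) = cs a"
  using C2 C3 by simp

lemma Q_in: "a \<in> I \<Longrightarrow> cs a \<in> Q X D x" unfolding Q_def by simp

lemma Qadd: assumes "a \<in> I" "b \<in> I" shows "qadd X D x (cs a) (cs b) = cs (add a b)"
proof -
  define a' where "a' = (SOME g. g \<in> cs a)"
  define b' where "b' = (SOME g. g \<in> cs b)"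
  have a': "a' \<in> I" "add a' (sc (-1) a) \<in> I2" using C3[OF assms(1)] cs_iff unfolding a'_def by auto
  have b': "b' \<in> I" "add b' (sc (-1) b) \<in> I2" using C3[OF assms(2)] cs_iff unfolding b'_def by auto
  have "add (add a' b') (sc (-1) (add a b)) \<in> I2"
    using id9 I2_add[OF b'(2) a'(2)] a' b' assms I_G by simp
  hence "add a' b' \<in> cs (add a b)" using cs_iff I_add a' b' by simp
  hence "cs (add a' b') = cs (add a b)" using C2 I_add assms by simp
  thus ?thesis unfolding qadd_def a'_def b'_def .
qed

lemma Qsc: assumes "a \<in> I" shows "qscale X D x r (cs a) = cs (sc r a)"
proof -
  define a' where "a' = (SOME g. g \<in> cs a)"
  have a': "a' \<in> I" "add a' (sc (-1) a) \<in> I2" using C3[OF assms(1)] cs_iff unfolding a'_def by auto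
  have "add (sc r a') (sc (-1) (sc r a)) \<in> I2"
    using id10 I2_sc[OF a'(2)] a' assms I_G by simp
  hence "sc r a' \<in> cs (sc r a)" using cs_iff I_sc a' by simp
  hence "cs (sc r a') = cs (sc r a)" using C2 I_sc assms by simp
  thus ?thesis unfolding qscale_def a'_def .
qed

end

context pt begin

abbreviation "E \<equiv> ext_tangent X D x"
abbreviation "TP \<equiv> Tprime X D x"
abbreviation "al \<equiv> alpha X D x"

lemma E0: "F \<in> E \<Longrightarrow> g \<notin> G \<Longrightarrow> F g = 0" unfolding ext_tangent_def by simp
lemma Esm: "F \<in> E \<Longrightarrow> dsmooth G (G_plots X D x) UNIV real_plots F" unfolding ext_tangent_def by simp
lemma Eadd: "F \<in> E \<Longrightarrow> g \<in> G \<Longrightarrow> h \<in> G \<Longrightarrow> F (add g h) = F g + F h" unfolding ext_tangent_def by simp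
lemma Esc: "F \<in> E \<Longrightarrow> g \<in> G \<Longrightarrow> F (sc c g) = c * F g" unfolding ext_tangent_def by simp
lemma Emul: "F \<in> E \<Longrightarrow> g \<in> G \<Longrightarrow> h \<in> G \<Longrightarrow> F (mul g h) = F g * gev x h + gev x g * F h"
  unfolding ext_tangent_def by simp

lemma F_I2: assumes F: "F \<in> E" shows "s \<in> I2 \<Longrightarrow> F s = 0"
proof (induction s rule: Ix2.induct)
  case zero
  have "F (sc 0 zero) = 0 * F zero" using Esc[OF F G_zero] .
  thus ?case using id14 by simp
next
  case (step s a b)
  have a: "a \<in> G" "gev x a = 0" and b: "b \<in> G" "gev x b = 0" using step.hyps Ix_iff by auto
  have s: "s \<in> G" using I2_I[OF step.hyps(1)] I_G by simp
  have "F (add s (mul a b)) = F s + F (mul a b)" using Eadd[OF F s G_mul[OF a(1) b(1)]] .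
  also have "\<dots> = 0" using Emul[OF F a(1) b(1)] a b step.IH by simp
  finally show ?case .
qed

lemma F_cs: assumes F: "F \<in> E" and h: "h \<in> I" and k: "k \<in> cs h" shows "F k = F h"
proof -
  have k': "k \<in> I" "add k (sc (-1) h) \<in> I2" using k cs_iff by auto
  have "0 = F (add k (sc (-1) h))" using F_I2[OF F k'(2)] by simp
  also have "\<dots> = F k + (-1) * F h" using Eadd[OF F I_G[OF k'(1)] G_sc[OF I_G[OF h]]] Esc[OF F I_G[OF h]] by simp
  finally show ?thesis by simp
qed

lemma F_one: assumes F: "F \<in> E" shows "F gone = 0"
  using Emul[OF F G_one G_one] id12 ev_one by simp

lemma al_cs: assumes F: "F \<in> E" and h: "h \<in> I" shows "al F (cs h) = F h"
  unfolding alpha_def using Q_in[OF h] F_cs[OF F h C3[OF h]] by simp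

lemma Q_cases: "c \<in> Q X D x \<Longrightarrow> \<exists>a. a \<in> I \<and> c = cs a" unfolding Q_def by auto

lemma al_T: assumes F: "F \<in> E" shows "al F \<in> TP"
  unfolding Tprime_def
proof (intro CollectI conjI allI ballI impI)
  fix c assume "c \<notin> Q X D x" thus "al F c = 0" unfolding alpha_def by simp
next
  show "dsmooth (Q X D x) (Q_plots X D x) UNIV real_plots (al F)"
    unfolding dsmooth_def
  proof (intro conjI allI impI)
    fix n U P assume QP: "Q_plots X D x n U P"
    have oU: "open_Rn n U" using QP unfolding Q_plots_def by simp
    show "real_plots n U (al F \<circ> P)"
    proof (rule real_plots_local[OF oU], intro ballI)
      fix u assume u: "u \<in> U"
      obtain V p where V: "open_Rn n V" "u \<in> V" "V \<subseteq> U" "I_plots X D x n V p" "\<forall>v\<in>V. P v = cs (p v)"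
        using QP u unfolding Q_plots_def by meson
      have Gp: "G_plots X D x n V p" and pI: "p ` V \<subseteq> I" using V(4) unfolding I_plots_def sub_plots_def by auto
      have "real_plots n V (F \<circ> p)" using Esm[OF F] Gp unfolding dsmooth_def by simp
      hence "real_plots n V (al F \<circ> P)"
        by (rule real_plots_cong) (use V(5) pI al_cs[OF F] in auto)
      thus "\<exists>V. open_Rn n V \<and> u \<in> V \<and> V \<subseteq> U \<and> real_plots n V (al F \<circ> P)" using V by blast
    qed
  qed simp
next
  fix c d assume c: "c \<in> Q X D x" and d: "d \<in> Q X D x"
  obtain a where a: "a \<in> I" "c = cs a" using Q_cases[OF c] by blast
  obtain b where b: "b \<in> I" "d = cs b" using Q_cases[OF d] by blast
  show "al F (qadd X D x c d) = al F c + al F d"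
    using Qadd[OF a(1) b(1)] al_cs[OF F I_add[OF a(1) b(1)]] al_cs[OF F a(1)] al_cs[OF F b(1)]
      Eadd[OF F I_G[OF a(1)] I_G[OF b(1)]] a(2) b(2) by simp
next
  fix r c assume c: "c \<in> Q X D x"
  obtain a where a: "a \<in> I" "c = cs a" using Q_cases[OF c] by blast
  show "al F (qscale X D x r c) = r * al F c"
    using Qsc[OF a(1)] al_cs[OF F I_sc[OF a(1)]] al_cs[OF F a(1)] Esc[OF F I_G[OF a(1)]] a(2) by simp
qed

lemma dec_I: "g \<in> G \<Longrightarrow> add g (sc (- gev x g) gone) \<in> I"
  unfolding Ix_iff using G_add G_sc G_one ev_add ev_sc ev_one by simp

lemma al_inj: "inj_on al E"
proof (rule inj_onI)
  fix F F' assume F: "F \<in> E" and F': "F' \<in> E" and eq: "al F = al F'"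
  show "F = F'"
  proof
    fix g show "F g = F' g"
    proof (cases "g \<in> G")
      case False thus ?thesis using E0[OF F] E0[OF F'] by simp
    next
      case True
      let ?h = "add g (sc (- gev x g) gone)"
      have h: "?h \<in> I" using dec_I[OF True] .
      have hh: "H ?h = H g" if "H \<in> E" for H
        using Eadd[OF that True G_sc[OF G_one]] Esc[OF that G_one] F_one[OF that] by simp
      have "F g = al F (cs ?h)" "F' g = al F' (cs ?h)" using al_cs[OF F h] al_cs[OF F' h] hh[OF F] hh[OF F'] by simp_all
      thus ?thesis using eq by simp
    qed
  qed
qed

end

context pt begin

definition Fp where "Fp \<phi> = (\<lambda>g. if g \<in> G then \<phi> (cs (add g (sc (- gev x g) gone))) else 0)"

lemma TP0: "\<phi> \<in> TP \<Longrightarrow> c \<notin> Q X D x \<Longrightarrow> \<phi> c = 0" unfolding Tprime_def by simp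
lemma TPsm: "\<phi> \<in> TP \<Longrightarrow> dsmooth (Q X D x) (Q_plots X D x) UNIV real_plots \<phi>" unfolding Tprime_def by simp
lemma phi_add: assumes "\<phi> \<in> TP" "a \<in> I" "b \<in> I" shows "\<phi> (cs (add a b)) = \<phi> (cs a) + \<phi> (cs b)"
proof -
  have "\<phi> (qadd X D x (cs a) (cs b)) = \<phi> (cs a) + \<phi> (cs b)"
    using assms(1) Q_in[OF assms(2)] Q_in[OF assms(3)] unfolding Tprime_def by simp
  thus ?thesis using Qadd[OF assms(2,3)] by simp
qed
lemma phi_sc: assumes "\<phi> \<in> TP" "a \<in> I" shows "\<phi> (cs (sc r a)) = r * \<phi> (cs a)"
proof -
  have "\<phi> (qscale X D x r (cs a)) = r * \<phi> (cs a)"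
    using assms(1) Q_in[OF assms(2)] unfolding Tprime_def by simp
  thus ?thesis using Qsc[OF assms(2)] by simp
qed
lemma phi_I2: assumes "\<phi> \<in> TP" "s \<in> I2" shows "\<phi> (cs s) = 0"
proof -
  have s: "s \<in> I" using I2_I[OF assms(2)] .
  have "s \<in> cs zero" unfolding cs_iff using s id11[OF I_G[OF s]] assms(2) by simp
  hence "cs s = cs zero" using C2 I_zero by simp
  moreover have "\<phi> (cs (sc 0 zero)) = 0 * \<phi> (cs zero)" using phi_sc[OF assms(1) I_zero] .
  ultimately show ?thesis using id14 by simp
qed

lemma idA: "g \<in> G \<Longrightarrow> h \<in> G \<Longrightarrow>
  add (add g h) (sc (-(e1+e2)) gone) = add (add g (sc (-e1) gone)) (add h (sc (-e2) gone))"
  by (rule ap_eq'[OF ap_add[OF ap_add[OF ap_val ap_val] ap_sc[OF ap_one]]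
        ap_add[OF ap_add[OF ap_val ap_sc[OF ap_one]] ap_add[OF ap_val ap_sc[OF ap_one]]]])
     (simp_all add: algebra_simps)
lemma idS: "g \<in> G \<Longrightarrow>
  add (sc c g) (sc (-(c*e)) gone) = sc c (add g (sc (-e) gone))"
  by (rule ap_eq'[OF ap_add[OF ap_sc[OF ap_val] ap_sc[OF ap_one]] ap_sc[OF ap_add[OF ap_val ap_sc[OF ap_one]]]])
     (simp_all add: algebra_simps)
lemma idM: "g \<in> G \<Longrightarrow> h \<in> G \<Longrightarrow>
  add (mul g h) (sc (-(e1*e2)) gone) =
  add (mul (add g (sc (-e1) gone)) (add h (sc (-e2) gone)))
      (add (sc e2 (add g (sc (-e1) gone))) (sc e1 (add h (sc (-e2) gone))))"
  by (rule ap_eq'[OF ap_add[OF ap_mul[OF ap_val ap_val] ap_sc[OF ap_one]]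
        ap_add[OF ap_mul[OF ap_add[OF ap_val ap_sc[OF ap_one]] ap_add[OF ap_val ap_sc[OF ap_one]]]
                  ap_add[OF ap_sc[OF ap_add[OF ap_val ap_sc[OF ap_one]]] ap_sc[OF ap_add[OF ap_val ap_sc[OF ap_one]]]]]])
     (simp_all add: algebra_simps)

lemma Fp_add: assumes P: "\<phi> \<in> TP" and g: "g \<in> G" and h: "h \<in> G"
  shows "Fp \<phi> (add g h) = Fp \<phi> g + Fp \<phi> h"
proof -
  have "Fp \<phi> (add g h) = \<phi> (cs (add (add g h) (sc (-(gev x g + gev x h)) gone)))"
    unfolding Fp_def using G_add[OF g h] ev_add[OF g h] by simp
  also have "\<dots> = \<phi> (cs (add (add g (sc (- gev x g) gone)) (add h (sc (- gev x h) gone))))"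
    using idA[OF g h] by simp
  also have "\<dots> = Fp \<phi> g + Fp \<phi> h" unfolding Fp_def using phi_add[OF P dec_I[OF g] dec_I[OF h]] g h by simp
  finally show ?thesis .
qed

lemma Fp_sc: assumes P: "\<phi> \<in> TP" and g: "g \<in> G"
  shows "Fp \<phi> (sc c g) = c * Fp \<phi> g"
proof -
  have "Fp \<phi> (sc c g) = \<phi> (cs (add (sc c g) (sc (-(c * gev x g)) gone)))"
    unfolding Fp_def using G_sc[OF g] ev_sc[OF g] by simp
  also have "\<dots> = \<phi> (cs (sc c (add g (sc (- gev x g) gone))))"
    using idS[OF g] by simp
  also have "\<dots> = c * Fp \<phi> g" unfolding Fp_def using phi_sc[OF P dec_I[OF g]] g by simp
  finally show ?thesis .
qed

lemma Fp_mul: assumes P: "\<phi> \<in> TP" and g: "g \<in> G" and h: "h \<in> G"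
  shows "Fp \<phi> (mul g h) = Fp \<phi> g * gev x h + gev x g * Fp \<phi> h"
proof -
  let ?A = "add g (sc (- gev x g) gone)" and ?B = "add h (sc (- gev x h) gone)"
  have A: "?A \<in> I" and B: "?B \<in> I" using dec_I g h by auto
  have "Fp \<phi> (mul g h) = \<phi> (cs (add (mul g h) (sc (-(gev x g * gev x h)) gone)))"
    unfolding Fp_def using G_mul[OF g h] ev_mul[OF g h] by simp
  also have "\<dots> = \<phi> (cs (add (mul ?A ?B) (add (sc (gev x h) ?A) (sc (gev x g) ?B))))"
    using idM[OF g h] by simp
  also have "\<dots> = \<phi> (cs (mul ?A ?B)) + (\<phi> (cs (sc (gev x h) ?A)) + \<phi> (cs (sc (gev x g) ?B)))"
    using phi_add[OF P I_mul[OF A I_G[OF B]] I_add[OF I_sc[OF A] I_sc[OF B]]]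
      phi_add[OF P I_sc[OF A] I_sc[OF B]] by simp
  also have "\<dots> = gev x h * \<phi> (cs ?A) + gev x g * \<phi> (cs ?B)"
    using phi_I2[OF P I2_mul[OF A B]] phi_sc[OF P A] phi_sc[OF P B] by simp
  also have "\<dots> = Fp \<phi> g * gev x h + gev x g * Fp \<phi> h" unfolding Fp_def using g h by simp
  finally show ?thesis .
qed

lemma al_Fp: assumes P: "\<phi> \<in> TP" shows "al (Fp \<phi>) = \<phi>"
proof
  fix c show "al (Fp \<phi>) c = \<phi> c"
  proof (cases "c \<in> Q X D x")
    case False thus ?thesis unfolding alpha_def using TP0[OF P] by simp
  next
    case True
    obtain a where a: "a \<in> I" "c = cs a" using Q_cases[OF True] by blast
    define a' where "a' = (SOME g. g \<in> cs a)"
    have a'c: "a' \<in> cs a" using C3[OF a(1)] unfolding a'_def .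
    have a': "a' \<in> I" using a'c cs_iff by simp
    have ga: "a' \<in> G" "gev x a' = 0" using a' Ix_iff by auto
    have "al (Fp \<phi>) c = Fp \<phi> a'" unfolding alpha_def a'_def using True a(2) by simp
    also have "\<dots> = \<phi> (cs a')" unfolding Fp_def using ga id13[OF ga(1)] by simp
    also have "\<dots> = \<phi> c" using C2[OF a'c a(1)] a(2) by simp
    finally show ?thesis .
  qed
qed

end

context pt begin

lemma fun_plots_shift:
  assumes B: "B \<in> N" and fp: "fun_plots B (sub_plots D B) n V q"
  defines "q' \<equiv> (\<lambda>v b. if b \<in> B then q v b - q v x else 0)"
  shows "fun_plots B (sub_plots D B) n V q'"
proof -
  have oV: "open_Rn n V" and qC: "q ` V \<subseteq> Cinf B (sub_plots D B)"
    and qs: "dsmooth (V \<times> B) (prod_plots (std_plots n V) (sub_plots D B)) UNIV real_plots (\<lambda>(u, b). q u b)"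
    using fp unfolding fun_plots_def by auto
  have xB: "x \<in> B" using N_x[OF B] .
  have "q' ` V \<subseteq> Cinf B (sub_plots D B)"
  proof
    fix f assume "f \<in> q' ` V"
    then obtain v where v: "v \<in> V" "f = q' v" by blast
    have "q v \<in> Cinf B (sub_plots D B)" using qC v(1) by blast
    from Cinf_subc[OF this, of "q v x"] show "f \<in> Cinf B (sub_plots D B)" unfolding v(2) q'_def .
  qed
  moreover have "dsmooth (V \<times> B) (prod_plots (std_plots n V) (sub_plots D B)) UNIV real_plots (\<lambda>(u, b). q' u b)"
    unfolding dsmooth_def
  proof (intro conjI allI impI)
    fix k W pp assume PP: "prod_plots (std_plots n V) (sub_plots D B) k W pp"
    have st: "std_plots n V k W (fst \<circ> pp)" and sb: "sub_plots D B k W (snd \<circ> pp)"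
      using PP unfolding prod_plots_def by auto
    have oW: "open_Rn k W" using st unfolding std_plots_def by simp
    have sB: "snd (pp w) \<in> B" if "w \<in> W" for w using sb that unfolding sub_plots_def by auto
    let ?pp2 = "\<lambda>w. (fst (pp w), x)"
    have "fst \<circ> ?pp2 = fst \<circ> pp" by (simp add: comp_def)
    moreover have "snd \<circ> ?pp2 = (\<lambda>_. x)" by (simp add: comp_def)
    moreover have "sub_plots D B k W (\<lambda>_. x)" unfolding sub_plots_def using plot_const[OF oW xX] xB by auto
    ultimately have PP2: "prod_plots (std_plots n V) (sub_plots D B) k W ?pp2"
      unfolding prod_plots_def using st by simp
    have r1: "real_plots k W ((\<lambda>(u, b). q u b) \<circ> pp)" using qs PP unfolding dsmooth_def by simp
    have r2: "real_plots k W ((\<lambda>(u, b). q u b) \<circ> ?pp2)" using qs PP2 unfolding dsmooth_def by blast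
    have "real_plots k W (\<lambda>w. ((\<lambda>(u, b). q u b) \<circ> pp) w - ((\<lambda>(u, b). q u b) \<circ> ?pp2) w)"
      using r1 r2 smooth_diff unfolding real_plots_def by blast
    thus "real_plots k W ((\<lambda>(u, b). q' u b) \<circ> pp)"
      by (rule real_plots_cong) (use sB in \<open>auto simp: q'_def split_beta\<close>)
  qed simp
  ultimately show ?thesis using oV unfolding fun_plots_def by simp
qed

lemma Fp_smooth: assumes P: "\<phi> \<in> TP" shows "dsmooth G (G_plots X D x) UNIV real_plots (Fp \<phi>)"
  unfolding dsmooth_def
proof (intro conjI allI impI)
  fix n U PP assume GP: "G_plots X D x n U PP"
  have oU: "open_Rn n U" using GP unfolding G_plots_def by simp
  show "real_plots n U (Fp \<phi> \<circ> PP)"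
  proof (rule real_plots_local[OF oU], intro ballI)
    fix u assume u: "u \<in> U"
    obtain V B q where V: "open_Rn n V" "u \<in> V" "V \<subseteq> U" "B \<in> N"
      "fun_plots B (sub_plots D B) n V q" "\<forall>v\<in>V. PP v = germ X D x (B, q v)"
      using GP u unfolding G_plots_def by meson
    define q' where "q' = (\<lambda>v b. if b \<in> B then q v b - q v x else 0)"
    define p where "p = (\<lambda>v. germ X D x (B, q' v))"
    have fq': "fun_plots B (sub_plots D B) n V q'" unfolding q'_def by (rule fun_plots_shift[OF V(4,5)])
    have xB: "x \<in> B" using N_x[OF V(4)] .
    have Rq: "(B, q v) \<in> R" if "v \<in> V" for v
      using V(4,5) that unfolding R_iff fun_plots_def by auto
    have Rq': "(B, q' v) \<in> R" if "v \<in> V" for v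
      using V(4) fq' that unfolding R_iff fun_plots_def by auto
    have pI: "p v \<in> I" if "v \<in> V" for v
      unfolding Ix_iff p_def using germ_in[OF Rq'[OF that]] ap_ev[OF ap_germ[OF Rq'[OF that]]] xB
      by (simp add: q'_def)
    have GPp: "G_plots X D x n V p"
      unfolding G_plots_def
    proof (intro conjI ballI)
      show "open_Rn n V" by (rule V(1))
      show "p ` V \<subseteq> G" using pI I_G by auto
      fix v assume "v \<in> V"
      show "\<exists>V' B' q''. open_Rn n V' \<and> v \<in> V' \<and> V' \<subseteq> V \<and> B' \<in> N \<and>
          fun_plots B' (sub_plots D B') n V' q'' \<and> (\<forall>w\<in>V'. p w = germ X D x (B', q'' w))"
        by (rule exI[of _ V], rule exI[of _ B], rule exI[of _ q']) (use V(1,4) \<open>v \<in> V\<close> fq' in \<open>simp add: p_def\<close>)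
    qed
    have IP: "I_plots X D x n V p" unfolding I_plots_def sub_plots_def using GPp pI by auto
    have QP: "Q_plots X D x n V (cs \<circ> p)"
      unfolding Q_plots_def
    proof (intro conjI ballI)
      show "open_Rn n V" by (rule V(1))
      show "(cs \<circ> p) ` V \<subseteq> Q X D x" using pI Q_in by auto
      fix v assume "v \<in> V"
      show "\<exists>V' p'. open_Rn n V' \<and> v \<in> V' \<and> V' \<subseteq> V \<and> I_plots X D x n V' p' \<and> (\<forall>w\<in>V'. (cs \<circ> p) w = cs (p' w))"
        by (rule exI[of _ V], rule exI[of _ p]) (use V(1) \<open>v \<in> V\<close> IP in simp)
    qed
    have r: "real_plots n V (\<phi> \<circ> (cs \<circ> p))" using TPsm[OF P] QP unfolding dsmooth_def by blast
    have eq: "(Fp \<phi> \<circ> PP) v = (\<phi> \<circ> (cs \<circ> p)) v" if v: "v \<in> V" for v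
    proof -
      have g: "germ X D x (B, q v) \<in> G" using germ_in[OF Rq[OF v]] .
      have ev: "gev x (germ X D x (B, q v)) = q v x" using ap_ev[OF ap_germ[OF Rq[OF v]]] by simp
      have "add (germ X D x (B, q v)) (sc (- q v x) gone) = p v"
        unfolding p_def
      proof (rule ap_eq[OF ap_add[OF ap_germ[OF Rq[OF v]] ap_sc[OF ap_one]] ap_germ[OF Rq'[OF v]]])
        show "eventually (\<lambda>y. snd (B, q v) y + - q v x * 1 = snd (B, q' v) y) nx"
          using ev_N[OF V(4)] by (rule eventually_mono) (simp add: q'_def)
      qed
      thus ?thesis unfolding Fp_def using V(6) v g ev by simp
    qed
    have "real_plots n V (Fp \<phi> \<circ> PP)" using r by (rule real_plots_cong) (use eq in simp)
    thus "\<exists>V. open_Rn n V \<and> u \<in> V \<and> V \<subseteq> U \<and> real_plots n V (Fp \<phi> \<circ> PP)" using V by blast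
  qed
qed simp

lemma Fp_E: assumes P: "\<phi> \<in> TP" shows "Fp \<phi> \<in> E"
  unfolding ext_tangent_def
  using Fp_smooth[OF P] Fp_add[OF P] Fp_sc[OF P] Fp_mul[OF P] by (simp add: Fp_def)

lemma bij: "bij_betw al E TP"
  unfolding bij_betw_def
proof
  show "inj_on al E" by (rule al_inj)
  show "al ` E = TP"
  proof
    show "al ` E \<subseteq> TP" using al_T by auto
    show "TP \<subseteq> al ` E"
    proof
      fix \<phi> assume "\<phi> \<in> TP"
      thus "\<phi> \<in> al ` E" using Fp_E al_Fp by (metis image_eqI)
    qed
  qed
qed

end


theorem proposition3p11:
  fixes X :: "'a set" and D :: "'a plots" and x :: 'a
  assumes "diffeology X D" and "x \<in> X"
  shows "bij_betw (alpha X D x) (ext_tangent X D x) (Tprime X D x) \<and>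
    (\<forall>F\<in>ext_tangent X D x. \<forall>G\<in>ext_tangent X D x.
       alpha X D x (\<lambda>g. F g + G g) = (\<lambda>c. alpha X D x F c + alpha X D x G c)) \<and>
    (\<forall>F\<in>ext_tangent X D x. \<forall>r::real.
       alpha X D x (\<lambda>g. r * F g) = (\<lambda>c. r * alpha X D x F c))"
proof -
  interpret pt X D x by (rule pt.intro) (rule assms)+
  show ?thesis
    apply (intro conjI)
      apply (rule bij)
     apply (simp add: alpha_def fun_eq_iff)
    apply (simp add: alpha_def fun_eq_iff)
    done
qed

end
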